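(* Let $(T,X)$ be a semiflow, where $T$ is a topological monoid such that $\bigcap_{s\in F}Ts\ne\emptyset$ for every finite $F\subseteq T$, and $X$ is a Hausdorff uniform space. Let $x\in X$ be such that $\overline{Tx}$ is compact and $\omega[x]\subseteq\mathtt{Equi}(T,X)$. Then $\omega[x]$ is a minimal subset of $X$, $\omega[x]\subseteq\mathtt{RE}(T,X)$, and $x\in\mathtt{AAP}(T,X)$. If in addition $T$ is an amenable semigroup, then $(T,\omega[x])$ is an a.p. subdynamic.
   Context: $\mathscr U_X$ is a compatible symmetric uniformity; $\varepsilon[A]=\{y:\exists a\in A,(a,y)\in\varepsilon\}$. $\omega[x]=\{w\in X:$ for every neighborhood $U$ of $w$ and every $s\in T$ there is $t\in T$ with $tsx\in U\}$. $\mathtt{Equi}(T,X)$ is the set of $x$ such that for every $\varepsilon\in\mathscr U_X$ there is a neighborhood $U$ of $x$ with $(tx,ty)\in\varepsilon$ for all $t\in T$, $y\in U$. $\mathtt{RE}(T,X)$ (Birkhoff recurrent points) is the set of $x$ such that for every $\varepsilon\in\mathscr U_X$ there is a compact $K\subseteq T$ with $Tx\subseteq\varepsilon[Ktx]$ for all $t\in T$. $A\subseteq T$ is syndetic if there is compact $K$ with $Kt\cap A\ne\emptyset$ for all $t$; $y$ is a.p. if its return-time sets to neighborhoods are syndetic. $\mathtt{AAP}(T,X)$ is the set of $x$ for which there is an a.p. point $y$ such that for every $\varepsilon\in\mathscr U_X$ there is $s\in T$ with $(tsx,tsy)\in\varepsilon$ for all $t\in T$. A minimal subset is a nonempty closed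 invariant set with no proper nonempty closed invariant subset. $(T,Z)$ is an a.p. dynamic if for every $\alpha$ there is a syndetic $A$ with $Az\subseteq\alpha[z]$ for all $z\in Z$. *)

theory Defs
  imports "HOL-Analysis.Analysis"
begin

definition semiflow :: "('t::topological_monoid_mult \<Rightarrow> 'x::topological_space \<Rightarrow> 'x) \<Rightarrow> bool" where
  "semiflow act \<longleftrightarrow> continuous_on UNIV (\<lambda>p. act (fst p) (snd p))
     \<and> (\<forall>x. act 1 x = x) \<and> (\<forall>s t x. act (s * t) x = act s (act t x))"

definition UX :: "('x::uniform_space \<times> 'x) set set" where
  "UX = {E. eventually (\<lambda>p. p \<in> E) uniformity \<and> sym E}"

definition ent_image :: "('x \<times> 'x) set \<Rightarrow> 'x set \<Rightarrow> 'x set" where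
  "ent_image E A = {y. \<exists>a\<in>A. (a, y) \<in> E}"

definition orbit :: "('t \<Rightarrow> 'x \<Rightarrow> 'x) \<Rightarrow> 'x \<Rightarrow> 'x set" where
  "orbit act x = range (\<lambda>t. act t x)"

definition omega_set :: "('t \<Rightarrow> 'x::topological_space \<Rightarrow> 'x) \<Rightarrow> 'x \<Rightarrow> 'x set" where
  "omega_set act x = {w. \<forall>U. open U \<and> w \<in> U \<longrightarrow> (\<forall>s. \<exists>t. act t (act s x) \<in> U)}"

definition Equi :: "('t \<Rightarrow> 'x::uniform_space \<Rightarrow> 'x) \<Rightarrow> 'x set" where
  "Equi act = {x. \<forall>\<epsilon>\<in>UX. \<exists>U. open U \<and> x \<in> U \<and> (\<forall>t. \<forall>y\<in>U. (act t x, act t y) \<in> \<epsilon>)}"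

definition RE :: "('t::topological_space \<Rightarrow> 'x::uniform_space \<Rightarrow> 'x) \<Rightarrow> 'x set" where
  "RE act = {x. \<forall>\<epsilon>\<in>UX. \<exists>K. compact K \<and>
     (\<forall>t. orbit act x \<subseteq> ent_image \<epsilon> ((\<lambda>k. act k (act t x)) ` K))}"

definition syndetic :: "'t::{topological_space, times} set \<Rightarrow> bool" where
  "syndetic A \<longleftrightarrow> (\<exists>K. compact K \<and> (\<forall>t. (\<lambda>k. k * t) ` K \<inter> A \<noteq> {}))"

definition ap_point :: "('t::{topological_space, times} \<Rightarrow> 'x::topological_space \<Rightarrow> 'x) \<Rightarrow> 'x \<Rightarrow> bool" where
  "ap_point act y \<longleftrightarrow> (\<forall>U. open U \<and> y \<in> U \<longrightarrow> syndetic {t. act t y \<in> U})"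

definition AAP :: "('t::{topological_space, times} \<Rightarrow> 'x::uniform_space \<Rightarrow> 'x) \<Rightarrow> 'x set" where
  "AAP act = {x. \<exists>y. ap_point act y \<and>
     (\<forall>\<epsilon>\<in>UX. \<exists>s. \<forall>t. (act t (act s x), act t (act s y)) \<in> \<epsilon>)}"

definition invariant :: "('t \<Rightarrow> 'x \<Rightarrow> 'x) \<Rightarrow> 'x set \<Rightarrow> bool" where
  "invariant act M \<longleftrightarrow> (\<forall>t. act t ` M \<subseteq> M)"

definition minimal_set :: "('t \<Rightarrow> 'x::topological_space \<Rightarrow> 'x) \<Rightarrow> 'x set \<Rightarrow> bool" where
  "minimal_set act M \<longleftrightarrow> M \<noteq> {} \<and> closed M \<and> invariant act M \<and>
     (\<forall>N. N \<subseteq> M \<and> N \<noteq> {} \<and> closed N \<and> invariant act N \<longrightarrow> N = M)"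

definition ap_dynamic :: "('t::{topological_space, times} \<Rightarrow> 'x::uniform_space \<Rightarrow> 'x) \<Rightarrow> 'x set \<Rightarrow> bool" where
  "ap_dynamic act Z \<longleftrightarrow> (\<forall>\<alpha>\<in>UX. \<exists>A. syndetic A \<and> (\<forall>z\<in>Z. \<forall>a\<in>A. act a z \<in> ent_image \<alpha> {z}))"

definition Cb :: "('t::topological_space \<Rightarrow> real) set" where
  "Cb = {f. continuous_on UNIV f \<and> bounded (range f)}"

definition amenable :: "'t::{topological_space, times} itself \<Rightarrow> bool" where
  "amenable _ \<longleftrightarrow> (\<exists>m :: ('t \<Rightarrow> real) \<Rightarrow> real.
      (\<forall>f\<in>Cb. \<forall>g\<in>Cb. \<forall>a b. m (\<lambda>s. a * f s + b * g s) = a * m f + b * m g)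
    \<and> (\<forall>f\<in>Cb. (\<forall>s. f s \<ge> 0) \<longrightarrow> m f \<ge> 0)
    \<and> m (\<lambda>_. 1) = 1
    \<and> (\<forall>f\<in>Cb. \<forall>t. m (\<lambda>s. f (t * s)) = m f))"

end

theory Submission
  imports Defs "HOL-Analysis.Analysis"
begin

lemma closure_open_iff:
  "w \<in> closure S \<longleftrightarrow> (\<forall>U. open U \<and> w \<in> U \<longrightarrow> U \<inter> S \<noteq> {})"
proof
  assume "w \<in> closure S"
  then show "\<forall>U. open U \<and> w \<in> U \<longrightarrow> U \<inter> S \<noteq> {}"
    using open_Int_closure_eq_empty by blast
next
  assume H: "\<forall>U. open U \<and> w \<in> U \<longrightarrow> U \<inter> S \<noteq> {}"
  show "w \<in> closure S"
  proof (rule ccontr)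
    assume "w \<notin> closure S"
    then have "open (- closure S)" "w \<in> - closure S" by auto
    with H have "(- closure S) \<inter> S \<noteq> {}" by blast
    then show False using closure_subset by blast
  qed
qed

lemma UX_ent: "E \<in> UX \<Longrightarrow> eventually (\<lambda>p. p \<in> E) uniformity"
  by (simp add: UX_def)

lemma UX_sym: "E \<in> UX \<Longrightarrow> (a, b) \<in> E \<Longrightarrow> (b, a) \<in> E"
  by (simp add: UX_def sym_def)

lemma UX_refl: "E \<in> UX \<Longrightarrow> (a, a) \<in> E"
  using UX_ent uniformity_refl by fastforce

lemma UX_UNIV: "UNIV \<in> UX"
  by (simp add: UX_def sym_def)

lemma UX_Int: "E \<in> UX \<Longrightarrow> F \<in> UX \<Longrightarrow> E \<inter> F \<in> UX"
  by (auto simp: UX_def sym_def intro: eventually_conj)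

lemma ent_symmetrize:
  assumes "eventually (\<lambda>p. p \<in> D) uniformity"
  shows "{p. p \<in> D \<and> prod.swap p \<in> D} \<in> UX"
proof -
  have "eventually (\<lambda>(x, y). (x,y) \<in> D) uniformity"
    using assms by (simp add: case_prod_unfold)
  then have "eventually (\<lambda>(x, y). (y,x) \<in> D) uniformity"
    using uniformity_sym[of "\<lambda>(x,y). (x,y) \<in> D"] by simp
  then have "eventually (\<lambda>p. prod.swap p \<in> D) uniformity"
    by (simp add: case_prod_unfold prod.swap_def)
  then have "eventually (\<lambda>p. p \<in> D \<and> prod.swap p \<in> D) uniformity"
    using assms eventually_conj by blast
  then show ?thesis
    by (auto simp: UX_def sym_def)
qed

lemma UX_half:
  assumes "E \<in> UX"
  obtains D where "D \<in> UX" "\<And>a b c. (a, b) \<in> D \<Longrightarrow> (b, c) \<in> D \<Longrightarrow> (a, c) \<in> E"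
proof -
  obtain D0 where D0: "eventually D0 uniformity" "\<And>a b c. D0 (a, b) \<Longrightarrow> D0 (b, c) \<Longrightarrow> (a, c) \<in> E"
    using uniformity_transE[OF UX_ent[OF assms]] by metis
  let ?D = "{p. p \<in> Collect D0 \<and> prod.swap p \<in> Collect D0}"
  have "?D \<in> UX" by (rule ent_symmetrize) (use D0 in simp)
  moreover have "\<And>a b c. (a, b) \<in> ?D \<Longrightarrow> (b, c) \<in> ?D \<Longrightarrow> (a, c) \<in> E"
    using D0 by auto
  ultimately show ?thesis using that by blast
qed

lemma UX_third:
  assumes "E \<in> UX"
  obtains D where "D \<in> UX" "\<And>a b c d. (a, b) \<in> D \<Longrightarrow> (b, c) \<in> D \<Longrightarrow> (c, d) \<in> D \<Longrightarrow> (a, d) \<in> E"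
proof -
  obtain D1 where D1: "D1 \<in> UX" "\<And>a b c. (a, b) \<in> D1 \<Longrightarrow> (b, c) \<in> D1 \<Longrightarrow> (a, c) \<in> E"
    using UX_half[OF assms] by metis
  obtain D2 where D2: "D2 \<in> UX" "\<And>a b c. (a, b) \<in> D2 \<Longrightarrow> (b, c) \<in> D2 \<Longrightarrow> (a, c) \<in> D1"
    using UX_half[OF D1(1)] by metis
  have "D2 \<inter> D1 \<in> UX" using UX_Int D1 D2 by blast
  moreover have "(a, d) \<in> E" if "(a, b) \<in> D2 \<inter> D1" "(b, c) \<in> D2 \<inter> D1" "(c, d) \<in> D2 \<inter> D1" for a b c d
    using that D1 D2 by blast
  ultimately show ?thesis using that by blast
qed

lemma UX_nhd:
  assumes "E \<in> UX"
  obtains U where "open U" "w \<in> U" "\<And>y. y \<in> U \<Longrightarrow> (w, y) \<in> E"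
proof -
  have "eventually (\<lambda>(x', y). x' = w \<longrightarrow> (w, y) \<in> E) uniformity"
    using UX_ent[OF assms] by (rule eventually_mono) auto
  then have "eventually (\<lambda>y. (w, y) \<in> E) (nhds w)"
    by (simp add: eventually_nhds_uniformity)
  then show ?thesis using that unfolding eventually_nhds by blast
qed

lemma open_UX:
  assumes "open U" "w \<in> U"
  obtains E where "E \<in> UX" "\<And>y. (w, y) \<in> E \<Longrightarrow> y \<in> U"
proof -
  have ev: "eventually (\<lambda>(x', y). x' = w \<longrightarrow> y \<in> U) uniformity"
    using assms open_uniformity by blast
  let ?D = "{(a, b). a = w \<longrightarrow> b \<in> U}"
  have "eventually (\<lambda>p. p \<in> ?D) uniformity"
    using ev by (simp add: case_prod_unfold)
  then have "{p. p \<in> ?D \<and> prod.swap p \<in> ?D} \<in> UX" by (rule ent_symmetrize)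
  moreover have "\<And>y. (w, y) \<in> {p. p \<in> ?D \<and> prod.swap p \<in> ?D} \<Longrightarrow> y \<in> U" by auto
  ultimately show ?thesis using that by blast
qed

lemma closed_UX_mem:
  assumes "closed N" "\<And>E. E \<in> UX \<Longrightarrow> \<exists>y\<in>N. (w, y) \<in> E"
  shows "w \<in> N"
proof (rule ccontr)
  assume "w \<notin> N"
  then obtain E where E: "E \<in> UX" "\<And>y. (w, y) \<in> E \<Longrightarrow> y \<in> - N"
    using open_UX[of "- N" w] assms(1) by auto
  then show False using assms(2)[OF E(1)] by auto
qed

locale sf =
  fixes act :: "'t::topological_monoid_mult \<Rightarrow> 'x::{uniform_space, t2_space} \<Rightarrow> 'x"
    and x :: 'x
  assumes sf: "semiflow act"
    and fip: "\<forall>F :: 't set. finite F \<longrightarrow> (\<Inter>s\<in>F. range (\<lambda>t. t * s)) \<noteq> {}"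
    and cpt: "compact (closure (orbit act x))"
    and eqc: "omega_set act x \<subseteq> Equi act"
begin

abbreviation "C \<equiv> closure (orbit act x)"
abbreviation "\<Omega> \<equiv> omega_set act x"

lemma act_one[simp]: "act 1 w = w"
  using sf by (simp add: semiflow_def)

lemma act_mult: "act (s * t) w = act s (act t w)"
  using sf by (simp add: semiflow_def)

lemma joint: "continuous_on UNIV (\<lambda>p. act (fst p) (snd p))"
  using sf by (simp add: semiflow_def)

lemma cont_x: "continuous_on S (act t)"
proof -
  let ?f = "act t"
  have "continuous_on UNIV (\<lambda>w. act (fst (t, w)) (snd (t, w)))"
    by (rule continuous_on_compose2[OF joint]) (auto intro: continuous_intros)
  then have "continuous_on UNIV ?f" by simp
  then show ?thesis by (rule continuous_on_subset) simp
qed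

lemma cont_t: "continuous_on S (\<lambda>s. act s w)"
proof -
  let ?f = "\<lambda>s. act s w"
  have "continuous_on UNIV (\<lambda>s. act (fst (s, w)) (snd (s, w)))"
    by (rule continuous_on_compose2[OF joint]) (auto intro: continuous_intros)
  then have "continuous_on UNIV ?f" by simp
  then show ?thesis by (rule continuous_on_subset) simp
qed

lemma orbit_inv: "act t ` orbit act w \<subseteq> orbit act w"
  by (auto simp: orbit_def act_mult[symmetric])

lemma closure_orbit_inv: "act t ` closure (orbit act w) \<subseteq> closure (orbit act w)"
proof (rule image_closure_subset[OF cont_x])
  show "closed (closure (orbit act w))" by simp
  show "act t ` orbit act w \<subseteq> closure (orbit act w)"
    using orbit_inv[of t w] closure_subset[of "orbit act w"] by (rule subset_trans)
qed

lemma inv_C: "w \<in> C \<Longrightarrow> act t w \<in> C"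
  using closure_orbit_inv by blast

lemma x_in_C: "x \<in> C"
proof -
  have "x \<in> orbit act x" unfolding orbit_def by (metis act_one rangeI)
  then show ?thesis by (rule subsetD[OF closure_subset])
qed

lemma omega_iff: "w \<in> \<Omega> \<longleftrightarrow> (\<forall>s. w \<in> closure (orbit act (act s x)))"
  unfolding omega_set_def closure_open_iff orbit_def by blast

lemma omega_eq: "\<Omega> = (\<Inter>s. closure (orbit act (act s x)))"
  using omega_iff by blast

lemma closed_omega: "closed \<Omega>"
  unfolding omega_eq by blast

lemma omega_sub_C: "\<Omega> \<subseteq> C"
proof
  fix w assume "w \<in> \<Omega>"
  then have "w \<in> closure (orbit act (act 1 x))" using omega_iff by blast
  then show "w \<in> C" by simp
qed

lemma compact_omega: "compact \<Omega>"
proof -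
  have "compact (C \<inter> \<Omega>)" using compact_Int_closed[OF cpt closed_omega] .
  moreover have "C \<inter> \<Omega> = \<Omega>" using omega_sub_C by blast
  ultimately show ?thesis by simp
qed

lemma omega_ne: "\<Omega> \<noteq> {}"
proof -
  let ?F = "range (\<lambda>s. closure (orbit act (act s x)))"
  have "C \<inter> \<Inter>?F \<noteq> {}"
  proof (rule compact_imp_fip[OF cpt])
    fix T assume "T \<in> ?F" then show "closed T" by blast
  next
    fix F' assume F': "finite F'" "F' \<subseteq> ?F"
    then obtain G where G: "finite G" "F' = (\<lambda>s. closure (orbit act (act s x))) ` G"
      by (meson finite_subset_image)
    then obtain r where r: "r \<in> (\<Inter>s\<in>G. range (\<lambda>t. t * s))" using fip by blast
    have "act r x \<in> orbit act x" by (simp add: orbit_def)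
    then have "act r x \<in> C" by (rule subsetD[OF closure_subset])
    moreover have "act r x \<in> \<Inter>F'"
    proof -
      have "act r x \<in> closure (orbit act (act s x))" if "s \<in> G" for s
      proof -
        have "r \<in> range (\<lambda>t. t * s)" using r that by (simp only: INT_iff)
        then obtain t where "r = t * s" by (auto simp only: image_iff)
        then have "act r x = act t (act s x)" by (simp add: act_mult)
        moreover have "act t (act s x) \<in> orbit act (act s x)" by (simp add: orbit_def)
        ultimately show ?thesis by (metis subsetD[OF closure_subset])
      qed
      then show ?thesis using G by blast
    qed
    ultimately show "C \<inter> \<Inter>F' \<noteq> {}" by blast
  qed
  then show ?thesis using omega_eq by auto
qed

lemma omega_inv: "w \<in> \<Omega> \<Longrightarrow> act t w \<in> \<Omega>"
  using closure_orbit_inv unfolding omega_iff by blast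

lemma orbit_sub_omega: "w \<in> \<Omega> \<Longrightarrow> orbit act w \<subseteq> \<Omega>"
  using omega_inv by (auto simp: orbit_def)

lemma equi_at:
  assumes "w \<in> \<Omega>" "E \<in> UX"
  obtains U where "open U" "w \<in> U" "\<And>t y. y \<in> U \<Longrightarrow> (act t w, act t y) \<in> E"
proof -
  have "w \<in> Equi act" using eqc assms by blast
  then obtain U where "open U" "w \<in> U" "\<forall>t. \<forall>y\<in>U. (act t w, act t y) \<in> E"
    using assms(2) unfolding Equi_def by blast
  then show ?thesis using that by blast
qed

lemma minimal: "minimal_set act \<Omega>"
  unfolding minimal_set_def
proof (intro conjI allI impI)
  show "\<Omega> \<noteq> {}" "closed \<Omega>" by (rule omega_ne, rule closed_omega)
  show "invariant act \<Omega>" using omega_inv by (auto simp: invariant_def)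
  fix N assume N: "N \<subseteq> \<Omega> \<and> N \<noteq> {} \<and> closed N \<and> invariant act N"
  then obtain n where n: "n \<in> N" by blast
  have "w \<in> N" if w: "w \<in> \<Omega>" for w
  proof (rule closed_UX_mem)
    show "closed N" using N by blast
    fix E :: "('x \<times> 'x) set" assume E: "E \<in> UX"
    obtain D :: "('x \<times> 'x) set" where D: "D \<in> UX" "\<And>a b c. (a, b) \<in> D \<Longrightarrow> (b, c) \<in> D \<Longrightarrow> (a, c) \<in> E"
      using UX_half[OF E] by metis
    have nO: "n \<in> \<Omega>" using n N by blast
    obtain U where U: "open U" "n \<in> U" "\<And>t y. y \<in> U \<Longrightarrow> (act t n, act t y) \<in> D"
      using equi_at[OF nO D(1)] by metis
    have "\<exists>t. act t (act 1 x) \<in> U" using nO U(1,2) unfolding omega_set_def by blast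
    then obtain t1 where t1: "act t1 x \<in> U" by auto
    obtain V where V: "open V" "w \<in> V" "\<And>y. y \<in> V \<Longrightarrow> (w, y) \<in> D"
      using UX_nhd[OF D(1), of w] by metis
    have "\<exists>t. act t (act t1 x) \<in> V" using w V(1,2) unfolding omega_set_def by blast
    then obtain t where t: "act t (act t1 x) \<in> V" by blast
    have "(w, act t (act t1 x)) \<in> D" using V t by blast
    moreover have "(act t (act t1 x), act t n) \<in> D"
      using U(3)[OF t1, of t] UX_sym[OF D(1)] by blast
    ultimately have "(w, act t n) \<in> E" using D by blast
    moreover have "act t n \<in> N" using N n by (auto simp: invariant_def)
    ultimately show "\<exists>y\<in>N. (w, y) \<in> E" by blast
  qed
  then show "N = \<Omega>" using N by blast
qed

lemma minimalD: "N \<subseteq> \<Omega> \<Longrightarrow> N \<noteq> {} \<Longrightarrow> closed N \<Longrightarrow> invariant act N \<Longrightarrow> N = \<Omega>"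
  using minimal unfolding minimal_set_def by blast

lemma closure_orbit_omega: "w \<in> \<Omega> \<Longrightarrow> closure (orbit act w) = \<Omega>"
proof (rule minimalD)
  assume w: "w \<in> \<Omega>"
  show "closure (orbit act w) \<subseteq> \<Omega>"
    using orbit_sub_omega[OF w] closed_omega by (simp add: closure_minimal)
  show "closure (orbit act w) \<noteq> {}" by (simp add: orbit_def)
  show "invariant act (closure (orbit act w))"
    using closure_orbit_inv by (auto simp: invariant_def)
qed simp

lemma hit_open:
  assumes "w \<in> \<Omega>" "open V" "V \<inter> \<Omega> \<noteq> {}"
  shows "\<exists>k. act k w \<in> V"
proof -
  have "V \<inter> closure (orbit act w) \<noteq> {}" using closure_orbit_omega[OF assms(1)] assms by simp
  then have "V \<inter> orbit act w \<noteq> {}" using assms(2) open_Int_closure_eq_empty by blast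
  then show ?thesis by (auto simp: orbit_def)
qed

lemma cover_open:
  assumes "open V" "V \<inter> \<Omega> \<noteq> {}"
  obtains K where "finite K" "\<And>y. y \<in> \<Omega> \<Longrightarrow> \<exists>k\<in>K. act k y \<in> V"
proof -
  have "\<Omega> \<subseteq> (\<Union>k\<in>UNIV. act k -` V)"
  proof
    fix y assume "y \<in> \<Omega>"
    then obtain k where "act k y \<in> V" using hit_open[OF _ assms] by blast
    then show "y \<in> (\<Union>k\<in>UNIV. act k -` V)" by blast
  qed
  moreover have "open (act k -` V)" for k
    using open_vimage[OF assms(1) cont_x] .
  ultimately obtain K where "K \<subseteq> UNIV" "finite K" "\<Omega> \<subseteq> (\<Union>k\<in>K. act k -` V)"
    using compactE_image[OF compact_omega, of UNIV "\<lambda>k. act k -` V"] by metis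
  then show ?thesis using that by blast
qed

lemma ap_omega: "w \<in> \<Omega> \<Longrightarrow> ap_point act w"
  unfolding ap_point_def syndetic_def
proof (intro allI impI)
  fix U assume w: "w \<in> \<Omega>" and U: "open U \<and> w \<in> U"
  then obtain K where K: "finite K" "\<And>y. y \<in> \<Omega> \<Longrightarrow> \<exists>k\<in>K. act k y \<in> U"
    using cover_open[of U] by blast
  have "\<forall>t. (\<lambda>k. k * t) ` K \<inter> {t. act t w \<in> U} \<noteq> {}"
  proof
    fix t
    obtain k where "k \<in> K" "act k (act t w) \<in> U" using K(2) omega_inv[OF w] by blast
    then show "(\<lambda>k. k * t) ` K \<inter> {t. act t w \<in> U} \<noteq> {}" by (auto simp: act_mult)
  qed
  then show "\<exists>K. compact K \<and> (\<forall>t. (\<lambda>k. k * t) ` K \<inter> {t. act t w \<in> U} \<noteq> {})"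
    using K(1) finite_imp_compact by blast
qed

lemma RE_omega: "\<Omega> \<subseteq> RE act"
proof
  fix w assume w: "w \<in> \<Omega>"
  show "w \<in> RE act"
    unfolding RE_def
  proof (intro CollectI ballI)
    fix \<epsilon> :: "('x \<times> 'x) set" assume \<epsilon>: "\<epsilon> \<in> UX"
    obtain D :: "('x \<times> 'x) set" where D: "D \<in> UX" "\<And>a b c. (a, b) \<in> D \<Longrightarrow> (b, c) \<in> D \<Longrightarrow> (a, c) \<in> \<epsilon>"
      using UX_half[OF \<epsilon>] by metis
    have "\<forall>y. \<exists>V. open V \<and> y \<in> V \<and> (\<forall>v\<in>V. (y, v) \<in> D)"
      using UX_nhd[OF D(1)] by metis
    then obtain V :: "'x \<Rightarrow> 'x set" where V: "\<And>y. open (V y)" "\<And>y. y \<in> V y" "\<And>y v. v \<in> V y \<Longrightarrow> (y, v) \<in> D"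
      by metis
    obtain Y where Y: "Y \<subseteq> \<Omega>" "finite Y" "\<Omega> \<subseteq> (\<Union>y\<in>Y. V y)"
      using compactE_image[OF compact_omega, of \<Omega> V] V by blast
    have "\<forall>y\<in>Y. \<exists>K. finite K \<and> (\<forall>z\<in>\<Omega>. \<exists>k\<in>K. act k z \<in> V y)"
    proof
      fix y assume "y \<in> Y"
      then have "V y \<inter> \<Omega> \<noteq> {}" using Y V by blast
      then show "\<exists>K. finite K \<and> (\<forall>z\<in>\<Omega>. \<exists>k\<in>K. act k z \<in> V y)"
        using cover_open[OF V(1)] by metis
    qed
    then obtain KK where KK: "\<And>y. y \<in> Y \<Longrightarrow> finite (KK y)"
      "\<And>y z. y \<in> Y \<Longrightarrow> z \<in> \<Omega> \<Longrightarrow> \<exists>k\<in>KK y. act k z \<in> V y"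
      by metis
    let ?K = "\<Union>y\<in>Y. KK y"
    have "finite ?K" using KK(1) Y(2) by blast
    moreover have "orbit act w \<subseteq> ent_image \<epsilon> ((\<lambda>k. act k (act t w)) ` ?K)" for t
    proof
      fix v assume "v \<in> orbit act w"
      then have v: "v \<in> \<Omega>" using orbit_sub_omega[OF w] by blast
      then obtain y where y: "y \<in> Y" "v \<in> V y" using Y by blast
      obtain k where k: "k \<in> KK y" "act k (act t w) \<in> V y"
        using KK(2)[OF y(1) omega_inv[OF w]] by blast
      have "(act k (act t w), v) \<in> \<epsilon>"
        using D(2)[OF UX_sym[OF D(1) V(3)[OF k(2)]] V(3)[OF y(2)]] .
      then show "v \<in> ent_image \<epsilon> ((\<lambda>k. act k (act t w)) ` ?K)"
        unfolding ent_image_def using k y by blast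
    qed
    ultimately show "\<exists>K. compact K \<and> (\<forall>t. orbit act w \<subseteq> ent_image \<epsilon> ((\<lambda>k. act k (act t w)) ` K))"
      using finite_imp_compact by blast
  qed
qed

end

lemma cont_rcomp: "continuous_on S (\<lambda>p::'a \<Rightarrow> 'b::topological_space. p \<circ> q)"
proof (rule continuous_on_coordinatewise_then_product)
  fix i
  show "continuous_on S (\<lambda>p::'a \<Rightarrow> 'b. (p \<circ> q) i)"
    using continuous_on_subset[OF continuous_on_product_coordinates[of "q i"], of S] by (simp add: o_def)
qed

lemma closed_coord: "closed (K :: 'b::topological_space set) \<Longrightarrow> closed {f :: 'a \<Rightarrow> 'b. f i \<in> K}"
proof -
  assume "closed K"
  then have "closed ((\<lambda>f::'a \<Rightarrow> 'b. f i) -` K)"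
    by (intro closed_vimage continuous_on_product_coordinates)
  then show ?thesis by (simp add: vimage_def)
qed

lemma open_coord: "open (K :: 'b::topological_space set) \<Longrightarrow> open {f :: 'a \<Rightarrow> 'b. f i \<in> K}"
proof -
  assume "open K"
  then have "open ((\<lambda>f::'a \<Rightarrow> 'b. f i) -` K)"
    by (intro open_vimage continuous_on_product_coordinates)
  then show ?thesis by (simp add: vimage_def)
qed

lemma Hausdorff_fun: "Hausdorff_space (euclidean :: ('a \<Rightarrow> 'b::t2_space) topology)"
  unfolding Hausdorff_space_def
proof (intro allI impI)
  fix f g :: "'a \<Rightarrow> 'b" assume "f \<in> topspace euclidean \<and> g \<in> topspace euclidean \<and> f \<noteq> g"
  then obtain i where fi: "f i \<noteq> g i" by auto
  obtain U V where UV: "open U" "open V" "f i \<in> U" "g i \<in> V" "U \<inter> V = {}"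
    using hausdorff[OF fi] by metis
  have o1: "openin euclidean {h::'a\<Rightarrow>'b. h i \<in> U}"
    using open_coord[OF UV(1)] by (rule open_openin[THEN iffD1])
  have o2: "openin euclidean {h::'a\<Rightarrow>'b. h i \<in> V}"
    using open_coord[OF UV(2)] by (rule open_openin[THEN iffD1])
  have f1: "f \<in> {h. h i \<in> U}" and g1: "g \<in> {h. h i \<in> V}" using UV by auto
  have dj: "disjnt {h::'a\<Rightarrow>'b. h i \<in> U} {h. h i \<in> V}"
    using UV by (auto simp: disjnt_def)
  show "\<exists>U V. openin euclidean U \<and> openin euclidean V \<and> f \<in> U \<and> g \<in> V \<and> disjnt U V"
    by (intro exI[of _ "{h::'a\<Rightarrow>'b. h i \<in> U}"] exI[of _ "{h::'a\<Rightarrow>'b. h i \<in> V}"] conjI o1 o2 f1 g1 dj)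
qed

lemma compact_imp_closed_fun:
  fixes S :: "('a \<Rightarrow> 'b::t2_space) set"
  assumes "compact S" shows "closed S"
proof -
  have "compactin euclidean S" using assms by (rule compactin_euclidean_iff[THEN iffD2])
  then have "closedin euclidean S" by (rule compactin_imp_closedin[OF Hausdorff_fun])
  then show ?thesis by (rule closed_closedin[THEN iffD2])
qed

lemma closed_singleton_fun: "closed {u :: 'a \<Rightarrow> 'b::t2_space}"
proof -
  have eq: "{u} = (\<Inter>i. {f :: 'a \<Rightarrow> 'b. f i \<in> {u i}})"
  proof (rule set_eqI)
    fix f :: "'a \<Rightarrow> 'b"
    show "f \<in> {u} \<longleftrightarrow> f \<in> (\<Inter>i. {f :: 'a \<Rightarrow> 'b. f i \<in> {u i}})"
      by (simp add: fun_eq_iff)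
  qed
  have "closed (\<Inter>i. {f :: 'a \<Rightarrow> 'b. f i \<in> {u i}})"
    by (rule closed_INT, intro ballI closed_coord closed_singleton)
  then show ?thesis unfolding eq .
qed

section \<open>Ellis--Numakura\<close>

definition csg :: "('a \<Rightarrow> 'a) set \<Rightarrow> ('a::topological_space \<Rightarrow> 'a) set \<Rightarrow> bool" where
  "csg S A \<longleftrightarrow> A \<subseteq> S \<and> A \<noteq> {} \<and> closed A \<and> (\<forall>a\<in>A. \<forall>b\<in>A. a \<circ> b \<in> A)"

lemma ellis_aux:
  fixes S :: "('a::t2_space \<Rightarrow> 'a) set"
  assumes S: "compact S" "S \<noteq> {}" "\<And>p q. p \<in> S \<Longrightarrow> q \<in> S \<Longrightarrow> p \<circ> q \<in> S"
  shows "\<exists>M. csg S M \<and> (\<forall>X. csg S X \<longrightarrow> X \<subseteq> M \<longrightarrow> X = M)"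
proof -
  let ?SS = "Collect (csg S)"
  have Sin: "S \<in> ?SS" using S compact_imp_closed_fun unfolding csg_def by auto
  have "\<exists>M\<in>uminus ` ?SS. \<forall>X\<in>uminus ` ?SS. M \<subseteq> X \<longrightarrow> X = M"
  proof (rule Zorn_Lemma2, intro ballI)
    fix \<C> assume C: "\<C> \<in> chains (uminus ` ?SS)"
    show "\<exists>U\<in>uminus ` ?SS. \<forall>X\<in>\<C>. X \<subseteq> U"
    proof (cases "\<C> = {}")
      case True then show ?thesis using Sin by blast
    next
      case False
      let ?D = "uminus ` \<C>"
      have CS: "\<C> \<subseteq> uminus ` ?SS" using C unfolding chains_def by blast
      have DD: "csg S X" if "X \<in> ?D" for X
      proof -
        obtain Y where "Y \<in> \<C>" "X = - Y" using \<open>X \<in> ?D\<close> by blast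
        then obtain Z where "csg S Z" "Y = - Z" using CS by blast
        then show ?thesis using \<open>X = - Y\<close> by simp
      qed
      have Dchain: "X \<subseteq> Y \<or> Y \<subseteq> X" if XY: "X \<in> ?D" "Y \<in> ?D" for X Y
      proof -
        obtain A B where AB: "A \<in> \<C>" "B \<in> \<C>" "X = - A" "Y = - B" using XY by blast
        have "A \<subseteq> B \<or> B \<subseteq> A" using chainsD[OF C AB(1,2)] .
        then show ?thesis using AB by auto
      qed
      have ne: "S \<inter> \<Inter>?D \<noteq> {}"
      proof (rule compact_imp_fip[OF S(1)])
        fix T assume "T \<in> ?D" then show "closed T" using DD unfolding csg_def by blast
      next
        fix F' assume F': "finite F'" "F' \<subseteq> ?D"
        show "S \<inter> \<Inter>F' \<noteq> {}"
        proof (cases "F' = {}")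
          case True then show ?thesis using S by simp
        next
          case False
          have "subset.chain ?D F'" unfolding subset_chain_def
          proof (intro conjI ballI)
            show "F' \<subseteq> ?D" by (rule F'(2))
            fix X Y assume "X \<in> F'" "Y \<in> F'"
            then show "X \<subseteq> Y \<or> Y \<subseteq> X" using F'(2) by (intro Dchain) auto
          qed
          then have "\<Inter>F' \<in> F'" using Inter_in_chain F'(1) False by blast
          then have "csg S (\<Inter>F')" using F'(2) DD by blast
          then show ?thesis unfolding csg_def by auto
        qed
      qed
      obtain X0 where X0: "X0 \<in> ?D" using False by blast
      have "\<Inter>?D \<subseteq> S" using DD[OF X0] X0 unfolding csg_def by blast
      moreover have "closed (\<Inter>?D)"
        by (rule closed_Inter) (use DD in \<open>simp add: csg_def\<close>)
      moreover have "\<forall>a\<in>\<Inter>?D. \<forall>b\<in>\<Inter>?D. a \<circ> b \<in> \<Inter>?D"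
      proof (intro ballI InterI)
        fix a b X assume "a \<in> \<Inter>?D" "b \<in> \<Inter>?D" "X \<in> ?D"
        then have "a \<in> X" "b \<in> X" by blast+
        then show "a \<circ> b \<in> X" using DD[OF \<open>X \<in> ?D\<close>] unfolding csg_def by blast
      qed
      ultimately have "csg S (\<Inter>?D)" using ne unfolding csg_def by blast
      moreover have "\<forall>X\<in>\<C>. X \<subseteq> - \<Inter>?D" by blast
      ultimately show ?thesis by blast
    qed
  qed
  then obtain M' where M': "M' \<in> uminus ` ?SS" "\<forall>X\<in>uminus ` ?SS. M' \<subseteq> X \<longrightarrow> X = M'"
    by (rule bexE)
  then obtain M where M: "csg S M" "M' = - M" by auto
  have "X = M" if "csg S X" "X \<subseteq> M" for X
  proof -
    have "- X \<in> uminus ` ?SS" using that(1) by simp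
    moreover have "M' \<subseteq> - X" using that(2) M(2) by auto
    ultimately have "- X = M'" using M'(2) by blast
    then show ?thesis using M(2) by simp
  qed
  then show ?thesis using M(1) by blast
qed

lemma ellis:
  fixes S :: "('a::t2_space \<Rightarrow> 'a) set"
  assumes S: "compact S" "S \<noteq> {}" "\<And>p q. p \<in> S \<Longrightarrow> q \<in> S \<Longrightarrow> p \<circ> q \<in> S"
  shows "\<exists>u\<in>S. u \<circ> u = u"
proof -
  obtain M where M: "csg S M" "\<And>X. csg S X \<Longrightarrow> X \<subseteq> M \<Longrightarrow> X = M"
    using ellis_aux[OF S] by metis
  have MS: "M \<subseteq> S" "M \<noteq> {}" "closed M" "\<And>a b. a \<in> M \<Longrightarrow> b \<in> M \<Longrightarrow> a \<circ> b \<in> M"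
    using M(1) unfolding csg_def by blast+
  have cM: "compact M"
  proof -
    have "compact (S \<inter> M)" by (rule compact_Int_closed[OF S(1) MS(3)])
    moreover have "S \<inter> M = M" using MS(1) by (rule Int_absorb1)
    ultimately show ?thesis by simp
  qed
  obtain u where u: "u \<in> M" using MS(2) by blast
  let ?Mu = "(\<lambda>p. p \<circ> u) ` M"
  have "compact ?Mu" by (rule compact_continuous_image[OF cont_rcomp cM])
  then have "closed ?Mu" by (rule compact_imp_closed_fun)
  moreover have sub: "?Mu \<subseteq> M" using MS(4) u by auto
  moreover have "?Mu \<noteq> {}" using u by auto
  moreover have "\<forall>a\<in>?Mu. \<forall>b\<in>?Mu. a \<circ> b \<in> ?Mu"
  proof (intro ballI)
    fix a b assume "a \<in> ?Mu" "b \<in> ?Mu"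
    then obtain a' b' where ab: "a' \<in> M" "b' \<in> M" "a = a' \<circ> u" "b = b' \<circ> u" by blast
    have "a' \<circ> u \<circ> b' \<in> M" using MS(4)[OF MS(4)[OF ab(1) u] ab(2)] .
    moreover have "a \<circ> b = (\<lambda>p. p \<circ> u) (a' \<circ> u \<circ> b')" using ab by (simp add: o_assoc)
    ultimately show "a \<circ> b \<in> ?Mu" by (intro image_eqI)
  qed
  moreover have "?Mu \<subseteq> S" using sub MS(1) by (rule subset_trans)
  ultimately have "csg S ?Mu" unfolding csg_def by blast
  then have Mu: "?Mu = M" using M(2) sub by blast
  let ?B = "{v \<in> M. v \<circ> u = u}"
  have "u \<in> ?Mu" using u Mu by simp
  then have "?B \<noteq> {}" by auto
  moreover have "closed ?B"
  proof -
    have "closed ((\<lambda>p. p \<circ> u) -` {u})" by (intro closed_vimage cont_rcomp closed_singleton_fun)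
    then have "closed (M \<inter> (\<lambda>p. p \<circ> u) -` {u})" using MS(3) by (intro closed_Int)
    moreover have "M \<inter> (\<lambda>p. p \<circ> u) -` {u} = ?B" by auto
    ultimately show ?thesis by simp
  qed
  moreover have "?B \<subseteq> S" using MS(1) by auto
  moreover have "\<forall>a\<in>?B. \<forall>b\<in>?B. a \<circ> b \<in> ?B"
  proof (intro ballI)
    fix a b assume "a \<in> ?B" "b \<in> ?B"
    then have "a \<in> M" "b \<in> M" "a \<circ> u = u" "b \<circ> u = u" by auto
    then show "a \<circ> b \<in> ?B" using MS(4) by (simp add: comp_assoc)
  qed
  ultimately have "csg S ?B" unfolding csg_def by blast
  then have "?B = M" using M(2) by blast
  then show ?thesis using u MS(1) by blast
qed

context sf
begin

definition R :: "'t \<Rightarrow> 'x \<Rightarrow> 'x" where "R t = (\<lambda>w. if w \<in> C then act t w else w)"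

definition Kc :: "'x \<Rightarrow> 'x set" where "Kc w = (if w \<in> C then C else {w})"

definition P :: "('x \<Rightarrow> 'x) set" where "P = {f. \<forall>w. f w \<in> Kc w}"

definition E :: "('x \<Rightarrow> 'x) set" where "E = closure (range R)"

lemma R_mult: "R s \<circ> R t = R (s * t)"
proof (rule ext)
  fix w show "(R s \<circ> R t) w = R (s * t) w"
    by (cases "w \<in> C") (simp_all add: R_def inv_C act_mult)
qed

lemma R_P: "R t \<in> P"
  by (simp add: R_def P_def Kc_def inv_C)

lemma closed_P: "closed P"
proof -
  have "P = (\<Inter>w. {f. f w \<in> Kc w})" by (auto simp: P_def)
  moreover have "closed (\<Inter>w. {f. f w \<in> Kc w})"
    by (rule closed_INT, intro ballI closed_coord) (simp add: Kc_def)
  ultimately show ?thesis by simp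
qed

lemma compact_P: "compact P"
proof -
  let ?K = "Kc"
  have "compactin (product_topology (\<lambda>i. euclidean) UNIV) (PiE UNIV ?K)"
    unfolding compactin_PiE using cpt by (auto simp: Kc_def)
  moreover have "PiE UNIV ?K = P" unfolding P_def PiE_UNIV_domain Pi_def by simp
  ultimately have "compactin euclidean P" by (simp add: euclidean_product_topology)
  then show ?thesis by (rule compactin_euclidean_iff[THEN iffD1])
qed

lemma E_sub_P: "E \<subseteq> P"
  unfolding E_def using R_P closed_P by (intro closure_minimal) auto

lemma closed_E: "closed E" by (simp add: E_def)

lemma compact_E: "compact E"
proof -
  have "compact (P \<inter> E)" by (rule compact_Int_closed[OF compact_P closed_E])
  moreover have "P \<inter> E = E" using E_sub_P by blast
  ultimately show ?thesis by simp
qed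

lemma R_E: "R t \<in> E"
  unfolding E_def by (rule subsetD[OF closure_subset]) simp

lemma cont_lcomp: "continuous_on P (\<lambda>q. R s \<circ> q)"
proof (rule continuous_on_coordinatewise_then_product)
  fix i
  show "continuous_on P (\<lambda>q. (R s \<circ> q) i)"
  proof (cases "i \<in> C")
    case True
    have "continuous_on P (\<lambda>q. q i)"
      by (rule continuous_on_subset[OF continuous_on_product_coordinates]) simp
    then have "continuous_on P (\<lambda>q. act s (q i))"
      by (rule continuous_on_compose2[OF cont_x[of UNIV]]) simp
    moreover have "(R s \<circ> q) i = act s (q i)" if "q \<in> P" for q
    proof -
      have "q i \<in> Kc i" using that by (simp add: P_def)
      then have "q i \<in> C" using True by (simp add: Kc_def)
      then show ?thesis by (simp add: R_def)
    qed
    ultimately show ?thesis using continuous_on_cong by fastforce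
  next
    case False
    have "(R s \<circ> q) i = i" if "q \<in> P" for q
    proof -
      have "q i \<in> Kc i" using that by (simp add: P_def)
      then have "q i = i" using False by (simp add: Kc_def)
      then show ?thesis using False by (simp add: R_def)
    qed
    then show ?thesis using continuous_on_cong[of P P "\<lambda>q. (R s \<circ> q) i" "\<lambda>q. i"] by simp
  qed
qed

lemma E_mult_R: "q \<in> E \<Longrightarrow> R s \<circ> q \<in> E"
proof -
  assume q: "q \<in> E"
  have "(\<lambda>q. R s \<circ> q) ` closure (range R) \<subseteq> E"
  proof (rule image_closure_subset)
    show "continuous_on (closure (range R)) (\<lambda>q. R s \<circ> q)"
      using continuous_on_subset[OF cont_lcomp E_sub_P] unfolding E_def .
    show "closed E" by (rule closed_E)
    show "(\<lambda>q. R s \<circ> q) ` range R \<subseteq> E" using R_mult R_E by auto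
  qed
  then show ?thesis using q unfolding E_def by blast
qed

lemma E_mult: "p \<in> E \<Longrightarrow> q \<in> E \<Longrightarrow> p \<circ> q \<in> E"
proof -
  assume p: "p \<in> E" and q: "q \<in> E"
  have "(\<lambda>p. p \<circ> q) ` closure (range R) \<subseteq> E"
  proof (rule image_closure_subset)
    show "continuous_on (closure (range R)) (\<lambda>p. p \<circ> q)" by (rule cont_rcomp)
    show "closed E" by (rule closed_E)
    show "(\<lambda>p. p \<circ> q) ` range R \<subseteq> E" using E_mult_R[OF q] by auto
  qed
  then show ?thesis using p unfolding E_def by blast
qed

definition J :: "('x \<Rightarrow> 'x) set" where "J = (\<Inter>s. (\<lambda>p. p \<circ> R s) ` E)"

lemma closed_slice: "closed ((\<lambda>p. p \<circ> R s) ` E)"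
  by (rule compact_imp_closed_fun, rule compact_continuous_image[OF cont_rcomp compact_E])

lemma slice_sub: "(\<lambda>p. p \<circ> R s) ` E \<subseteq> E"
  using E_mult R_E by blast

lemma J_sub: "J \<subseteq> E"
  unfolding J_def using slice_sub by blast

lemma closed_J: "closed J"
  unfolding J_def using closed_slice by blast

lemma compact_J: "compact J"
proof -
  have "compact (E \<inter> J)" by (rule compact_Int_closed[OF compact_E closed_J])
  moreover have "E \<inter> J = J" using J_sub by blast
  ultimately show ?thesis by simp
qed

lemma J_ne: "J \<noteq> {}"
proof -
  let ?F = "range (\<lambda>s. (\<lambda>p. p \<circ> R s) ` E)"
  have "E \<inter> \<Inter>?F \<noteq> {}"
  proof (rule compact_imp_fip[OF compact_E])
    fix T assume "T \<in> ?F" then show "closed T" using closed_slice by blast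
  next
    fix F' assume F': "finite F'" "F' \<subseteq> ?F"
    then obtain G where G: "finite G" "F' = (\<lambda>s. (\<lambda>p. p \<circ> R s) ` E) ` G"
      by (meson finite_subset_image)
    then obtain r where r: "r \<in> (\<Inter>s\<in>G. range (\<lambda>t. t * s))" using fip by blast
    have "R r \<in> (\<lambda>p. p \<circ> R s) ` E" if "s \<in> G" for s
    proof -
      have "r \<in> range (\<lambda>t. t * s)" using r that by (simp only: INT_iff)
      then obtain t where "r = t * s" by (auto simp only: image_iff)
      then have "R r = R t \<circ> R s" by (simp add: R_mult)
      then show ?thesis using R_E by (intro image_eqI)
    qed
    then have "R r \<in> \<Inter>F'" using G by blast
    then show "E \<inter> \<Inter>F' \<noteq> {}" using R_E by blast
  qed
  then show ?thesis unfolding J_def by auto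
qed

lemma J_mult: "p \<in> J \<Longrightarrow> q \<in> J \<Longrightarrow> p \<circ> q \<in> J"
proof -
  assume p: "p \<in> J" and q: "q \<in> J"
  show "p \<circ> q \<in> J" unfolding J_def
  proof (rule INT_I)
    fix s :: 't
    have "q \<in> (\<lambda>p. p \<circ> R s) ` E" using q unfolding J_def by blast
    then obtain q' where q': "q' \<in> E" "q = q' \<circ> R s" by blast
    have "p \<circ> q' \<in> E" using E_mult p q'(1) J_sub by blast
    moreover have eq: "p \<circ> q = p \<circ> q' \<circ> R s" using q' by (simp add: comp_assoc)
    ultimately show "p \<circ> q \<in> (\<lambda>p. p \<circ> R s) ` E" unfolding image_iff by (intro bexI[of _ "p \<circ> q'"])
  qed
qed

lemma idem: "\<exists>u\<in>J. u \<circ> u = u"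
  by (rule ellis[OF compact_J J_ne J_mult])

lemma eval_closure: "p \<in> E \<Longrightarrow> w \<in> C \<Longrightarrow> p w \<in> closure (orbit act w)"
proof -
  assume p: "p \<in> E" and w: "w \<in> C"
  have "(\<lambda>p. p w) ` closure (range R) \<subseteq> closure (orbit act w)"
  proof (rule image_closure_subset)
    show "continuous_on (closure (range R)) (\<lambda>p. p w)"
      by (rule continuous_on_subset[OF continuous_on_product_coordinates]) simp
    show "closed (closure (orbit act w))" by simp
    have "(\<lambda>p. p w) ` range R \<subseteq> orbit act w" using w by (auto simp: R_def orbit_def)
    then show "(\<lambda>p. p w) ` range R \<subseteq> closure (orbit act w)"
      using closure_subset by (rule subset_trans)
  qed
  then show ?thesis using p unfolding E_def by blast
qed

lemma AAP_x: "x \<in> AAP act"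
proof -
  obtain u where u: "u \<in> J" "u \<circ> u = u" using idem by blast
  let ?y = "u x"
  have yO: "?y \<in> \<Omega>" unfolding omega_iff
  proof
    fix s
    have "u \<in> (\<lambda>p. p \<circ> R s) ` E" using u(1) unfolding J_def by blast
    then obtain p where p: "p \<in> E" "u = p \<circ> R s" by blast
    have "u x = p (act s x)" using p x_in_C by (simp add: R_def)
    moreover have "act s x \<in> C" using inv_C x_in_C by blast
    ultimately show "u x \<in> closure (orbit act (act s x))" using eval_closure p(1) by simp
  qed
  have uy: "u ?y = ?y" using u(2) by (metis comp_apply)
  have approx: "\<exists>t. act t x \<in> W \<and> act t ?y \<in> W" if W: "open W" "?y \<in> W" for W
  proof -
    let ?O = "{f. f x \<in> W} \<inter> {f. f ?y \<in> W}"
    have "open ?O" using open_coord[OF W(1)] by (intro open_Int)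
    moreover have "u \<in> ?O" using W uy by simp
    moreover have "u \<in> closure (range R)" using u(1) J_sub unfolding E_def by blast
    ultimately have "?O \<inter> range R \<noteq> {}" unfolding closure_open_iff by blast
    then obtain t where t: "R t x \<in> W" "R t ?y \<in> W" by blast
    have "?y \<in> C" using yO omega_sub_C by blast
    then show ?thesis using t x_in_C by (auto simp: R_def)
  qed
  show ?thesis unfolding AAP_def
  proof (intro CollectI exI[of _ "u x"] conjI ballI)
    show "ap_point act ?y" by (rule ap_omega[OF yO])
    fix \<epsilon> :: "('x \<times> 'x) set" assume \<epsilon>: "\<epsilon> \<in> UX"
    obtain D :: "('x \<times> 'x) set" where D: "D \<in> UX" "\<And>a b c. (a, b) \<in> D \<Longrightarrow> (b, c) \<in> D \<Longrightarrow> (a, c) \<in> \<epsilon>"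
      using UX_half[OF \<epsilon>] by metis
    obtain U where U: "open U" "?y \<in> U" "\<And>t v. v \<in> U \<Longrightarrow> (act t ?y, act t v) \<in> D"
      using equi_at[OF yO D(1)] by metis
    obtain s where s: "act s x \<in> U" "act s ?y \<in> U" using approx[OF U(1,2)] by blast
    have "(act t (act s x), act t (act s ?y)) \<in> \<epsilon>" for t
      using D(2)[OF UX_sym[OF D(1) U(3)[OF s(1)]] U(3)[OF s(2)]] .
    then show "\<exists>s. \<forall>t. (act t (act s x), act t (act s ?y)) \<in> \<epsilon>" by blast
  qed
qed

end

lemma Hausdorff_euc: "Hausdorff_space (euclidean :: 'a::t2_space topology)"
  unfolding Hausdorff_space_def
proof (intro allI impI)
  fix a b :: 'a assume "a \<in> topspace euclidean \<and> b \<in> topspace euclidean \<and> a \<noteq> b"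
  then have ab: "a \<noteq> b" by blast
  obtain U V where UV: "open U" "open V" "a \<in> U" "b \<in> V" "U \<inter> V = {}"
    using hausdorff[OF ab] by metis
  have o1: "openin euclidean U" using UV(1) by (rule open_openin[THEN iffD1])
  have o2: "openin euclidean V" using UV(2) by (rule open_openin[THEN iffD1])
  have dj: "disjnt U V" using UV(5) by (simp add: disjnt_def)
  show "\<exists>U V. openin euclidean U \<and> openin euclidean V \<and> a \<in> U \<and> b \<in> V \<and> disjnt U V"
    by (intro exI[of _ U] exI[of _ V] conjI o1 o2 UV(3) UV(4) dj)
qed

lemma UX_INT: "finite A \<Longrightarrow> (\<And>a. a \<in> A \<Longrightarrow> G a \<in> UX) \<Longrightarrow> (\<Inter>a\<in>A. G a) \<in> UX"
proof (induction A rule: finite_induct)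
  case empty then show ?case by (simp add: UX_UNIV)
next
  case (insert a A)
  have "G a \<in> UX" using insert.prems by simp
  moreover have "(\<Inter>a\<in>A. G a) \<in> UX" using insert by simp
  ultimately have "G a \<inter> (\<Inter>a\<in>A. G a) \<in> UX" by (rule UX_Int)
  then show ?case by simp
qed

section \<open>Bounded continuous functions and means\<close>

lemma Cb_iff: "f \<in> Cb \<longleftrightarrow> continuous_on UNIV f \<and> (\<exists>B. \<forall>s. \<bar>f s\<bar> \<le> B)"
  unfolding Cb_def bounded_real by auto

lemma Cb_const: "(\<lambda>s. c) \<in> Cb"
  unfolding Cb_iff by (auto intro: continuous_intros)

lemma Cb_lin:
  assumes "f \<in> Cb" "g \<in> Cb"
  shows "(\<lambda>s. a * f s + b * g s) \<in> Cb"
proof -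
  obtain Bf Bg where B: "\<And>s. \<bar>f s\<bar> \<le> Bf" "\<And>s. \<bar>g s\<bar> \<le> Bg"
    and c: "continuous_on UNIV f" "continuous_on UNIV g" using assms unfolding Cb_iff by blast
  have "\<bar>a * f s + b * g s\<bar> \<le> \<bar>a\<bar> * Bf + \<bar>b\<bar> * Bg" for s
  proof -
    have "\<bar>a * f s\<bar> \<le> \<bar>a\<bar> * Bf" using B(1)[of s] by (simp add: abs_mult mult_left_mono)
    moreover have "\<bar>b * g s\<bar> \<le> \<bar>b\<bar> * Bg" using B(2)[of s] by (simp add: abs_mult mult_left_mono)
    ultimately show ?thesis using abs_triangle_ineq[of "a * f s" "b * g s"] by linarith
  qed
  moreover have "continuous_on UNIV (\<lambda>s. a * f s + b * g s)"
    using c by (intro continuous_intros)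
  ultimately show ?thesis unfolding Cb_iff by blast
qed

lemma Cb_sum: "finite K \<Longrightarrow> (\<And>k. k \<in> K \<Longrightarrow> f k \<in> Cb) \<Longrightarrow> (\<lambda>s. \<Sum>k\<in>K. f k s) \<in> Cb"
proof (induction K rule: finite_induct)
  case empty then show ?case using Cb_const[of 0] by simp
next
  case (insert k K)
  have "(\<lambda>s. \<Sum>k\<in>K. f k s) \<in> Cb" by (rule insert.IH) (simp add: insert.prems)
  moreover have "f k \<in> Cb" by (simp add: insert.prems)
  ultimately have "(\<lambda>s. 1 * f k s + 1 * (\<Sum>k\<in>K. f k s)) \<in> Cb"
    using Cb_lin[of "f k" "\<lambda>s. \<Sum>k\<in>K. f k s" 1 1] by simp
  then show ?case using insert by simp
qed

lemma m_zero:
  assumes lin: "\<forall>f\<in>Cb. \<forall>g\<in>Cb. \<forall>a b. m (\<lambda>s. a * f s + b * g s) = a * m f + b * m g"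
  shows "m (\<lambda>s. 0) = 0"
proof -
  have L: "\<forall>a b. m (\<lambda>s. a * (1::real) + b * 1) = a * m (\<lambda>s. 1) + b * m (\<lambda>s. 1)"
    by (rule bspec[OF bspec[OF lin Cb_const] Cb_const])
  have "m (\<lambda>s. 0 * (1::real) + 0 * 1) = 0 * m (\<lambda>s. 1) + 0 * m (\<lambda>s. 1)"
    by (rule L[rule_format])
  then show ?thesis by simp
qed

lemma m_sum:
  assumes lin: "\<forall>f\<in>Cb. \<forall>g\<in>Cb. \<forall>a b. m (\<lambda>s. a * f s + b * g s) = a * m f + b * m g"
  shows "finite K \<Longrightarrow> (\<And>k. k \<in> K \<Longrightarrow> f k \<in> Cb) \<Longrightarrow> m (\<lambda>s. \<Sum>k\<in>K. f k s) = (\<Sum>k\<in>K. m (f k))"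
proof (induction K rule: finite_induct)
  case empty then show ?case using m_zero[OF lin] by simp
next
  case (insert k K)
  have S: "(\<lambda>s. \<Sum>k\<in>K. f k s) \<in> Cb" by (rule Cb_sum[OF insert.hyps(1)]) (simp add: insert.prems)
  have fk: "f k \<in> Cb" by (simp add: insert.prems)
  have L: "\<forall>a b. m (\<lambda>s. a * f k s + b * (\<Sum>k\<in>K. f k s)) = a * m (f k) + b * m (\<lambda>s. \<Sum>k\<in>K. f k s)"
    by (rule bspec[OF bspec[OF lin fk] S])
  have "m (\<lambda>s. 1 * f k s + 1 * (\<Sum>k\<in>K. f k s)) = 1 * m (f k) + 1 * m (\<lambda>s. \<Sum>k\<in>K. f k s)"
    by (rule L[rule_format])
  then show ?case using insert by simp
qed

context sf
begin

lemma unif_equi: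
  assumes "\<epsilon> \<in> UX"
  obtains \<delta> where "\<delta> \<in> UX" "\<And>z y t. z \<in> \<Omega> \<Longrightarrow> (z, y) \<in> \<delta> \<Longrightarrow> (act t z, act t y) \<in> \<epsilon>"
proof -
  obtain D :: "('x \<times> 'x) set" where D: "D \<in> UX" "\<And>a b c. (a, b) \<in> D \<Longrightarrow> (b, c) \<in> D \<Longrightarrow> (a, c) \<in> \<epsilon>"
    using UX_half[OF assms] by metis
  have ex: "\<exists>G. G \<in> UX \<and> (\<forall>z' y t. (z, z') \<in> G \<longrightarrow> (z', y) \<in> G \<longrightarrow> (act t z', act t y) \<in> \<epsilon>)"
    if z: "z \<in> \<Omega>" for z
  proof -
    obtain U where U: "open U" "z \<in> U" "\<And>t v. v \<in> U \<Longrightarrow> (act t z, act t v) \<in> D"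
      using equi_at[OF z D(1)] by metis
    obtain F :: "('x \<times> 'x) set" where F: "F \<in> UX" "\<And>y. (z, y) \<in> F \<Longrightarrow> y \<in> U"
      using open_UX[OF U(1,2)] by metis
    obtain G :: "('x \<times> 'x) set" where G: "G \<in> UX" "\<And>a b c. (a, b) \<in> G \<Longrightarrow> (b, c) \<in> G \<Longrightarrow> (a, c) \<in> F"
      using UX_half[OF F(1)] by metis
    have "(act t z', act t y) \<in> \<epsilon>" if "(z, z') \<in> G" "(z', y) \<in> G" for z' y t
    proof -
      have "z' \<in> U" using F(2)[OF G(2)[OF that(1) UX_refl[OF G(1)]]] .
      moreover have "y \<in> U" using F(2)[OF G(2)[OF that]] .
      ultimately show ?thesis using D(2)[OF UX_sym[OF D(1) U(3)] U(3)] by blast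
    qed
    then show ?thesis using G(1) by blast
  qed
  then obtain G where G: "\<And>z. z \<in> \<Omega> \<Longrightarrow> G z \<in> UX"
    "\<And>z z' y t. z \<in> \<Omega> \<Longrightarrow> (z, z') \<in> G z \<Longrightarrow> (z', y) \<in> G z \<Longrightarrow> (act t z', act t y) \<in> \<epsilon>"
    by metis
  have "\<forall>z. \<exists>V. open V \<and> z \<in> V \<and> (z \<in> \<Omega> \<longrightarrow> (\<forall>v\<in>V. (z, v) \<in> G z))"
  proof
    fix z
    show "\<exists>V. open V \<and> z \<in> V \<and> (z \<in> \<Omega> \<longrightarrow> (\<forall>v\<in>V. (z, v) \<in> G z))"
    proof (cases "z \<in> \<Omega>")
      case True
      then show ?thesis using UX_nhd[OF G(1)[OF True], of z] by metis
    next
      case False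
      then show ?thesis by (intro exI[of _ UNIV]) simp
    qed
  qed
  then obtain V where V: "\<And>z. open (V z)" "\<And>z. z \<in> V z" "\<And>z v. z \<in> \<Omega> \<Longrightarrow> v \<in> V z \<Longrightarrow> (z, v) \<in> G z"
    by metis
  obtain Z0 where Z0: "Z0 \<subseteq> \<Omega>" "finite Z0" "\<Omega> \<subseteq> (\<Union>z\<in>Z0. V z)"
    using compactE_image[OF compact_omega, of \<Omega> V] V(1,2) by blast
  let ?\<delta> = "\<Inter>z\<in>Z0. G z"
  have "?\<delta> \<in> UX" using UX_INT[OF Z0(2)] G(1) Z0(1) by blast
  moreover have "(act t z', act t y) \<in> \<epsilon>" if zz: "z' \<in> \<Omega>" "(z', y) \<in> ?\<delta>" for z' y t
  proof -
    obtain z where z: "z \<in> Z0" "z' \<in> V z" using Z0(3) zz(1) by blast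
    have "z \<in> \<Omega>" using z Z0(1) by blast
    moreover have "(z, z') \<in> G z" using V(3)[OF \<open>z \<in> \<Omega>\<close> z(2)] .
    moreover have "(z', y) \<in> G z" using zz(2) z(1) by blast
    ultimately show ?thesis by (rule G(2))
  qed
  ultimately show ?thesis using that by blast
qed

lemma net:
  assumes "\<beta> \<in> UX"
  obtains F where "finite F" "\<And>t. \<exists>f\<in>F. \<forall>z\<in>\<Omega>. (act t z, act f z) \<in> \<beta>"
proof -
  obtain B :: "('x \<times> 'x) set" where B: "B \<in> UX"
    "\<And>a b c d. (a, b) \<in> B \<Longrightarrow> (b, c) \<in> B \<Longrightarrow> (c, d) \<in> B \<Longrightarrow> (a, d) \<in> \<beta>"
    using UX_third[OF assms] by metis
  obtain B' :: "('x \<times> 'x) set" where B': "B' \<in> UX" "\<And>a b c. (a, b) \<in> B' \<Longrightarrow> (b, c) \<in> B' \<Longrightarrow> (a, c) \<in> B"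
    using UX_half[OF B(1)] by metis
  obtain \<delta> where \<delta>: "\<delta> \<in> UX" "\<And>z y t. z \<in> \<Omega> \<Longrightarrow> (z, y) \<in> \<delta> \<Longrightarrow> (act t z, act t y) \<in> B"
    using unif_equi[OF B(1)] by metis
  have "\<forall>z. \<exists>N. open N \<and> z \<in> N \<and> (\<forall>v\<in>N. (z, v) \<in> \<delta>)"
    using UX_nhd[OF \<delta>(1)] by metis
  then obtain N where N: "\<And>z. open (N z)" "\<And>z. z \<in> N z" "\<And>z v. v \<in> N z \<Longrightarrow> (z, v) \<in> \<delta>"
    by metis
  have "\<forall>z. \<exists>M. open M \<and> z \<in> M \<and> (\<forall>v\<in>M. (z, v) \<in> B')"
    using UX_nhd[OF B'(1)] by metis
  then obtain M where M: "\<And>z. open (M z)" "\<And>z. z \<in> M z" "\<And>z v. v \<in> M z \<Longrightarrow> (z, v) \<in> B'"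
    by metis
  obtain Z0 where Z0: "Z0 \<subseteq> \<Omega>" "finite Z0" "\<Omega> \<subseteq> (\<Union>z\<in>Z0. N z)"
    using compactE_image[OF compact_omega, of \<Omega> N] N(1,2) by blast
  obtain W0 where W0: "W0 \<subseteq> \<Omega>" "finite W0" "\<Omega> \<subseteq> (\<Union>z\<in>W0. M z)"
    using compactE_image[OF compact_omega, of \<Omega> M] M(1,2) by blast
  define Pt where "Pt t = {p \<in> Z0 \<times> W0. act t (fst p) \<in> M (snd p)}" for t
  have "range Pt \<subseteq> Pow (Z0 \<times> W0)" unfolding Pt_def by auto
  then have fin: "finite (range Pt)" using Z0(2) W0(2) by (meson finite_Pow_iff finite_SigmaI finite_subset)
  define F where "F = (\<lambda>S. SOME t. Pt t = S) ` range Pt"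
  have "finite F" unfolding F_def using fin by blast
  moreover have "\<exists>f\<in>F. \<forall>z\<in>\<Omega>. (act t z, act f z) \<in> \<beta>" for t
  proof -
    let ?f = "SOME t'. Pt t' = Pt t"
    have fF: "?f \<in> F" unfolding F_def by blast
    have Pf: "Pt ?f = Pt t" by (rule someI[of "\<lambda>t'. Pt t' = Pt t" t]) simp
    have "(act t z, act ?f z) \<in> \<beta>" if z: "z \<in> \<Omega>" for z
    proof -
      obtain z0 where z0: "z0 \<in> Z0" "z \<in> N z0" using Z0(3) z by blast
      have z0O: "z0 \<in> \<Omega>" using z0(1) Z0(1) by blast
      have "act t z0 \<in> \<Omega>" using omega_inv[OF z0O] .
      then obtain w where w: "w \<in> W0" "act t z0 \<in> M w" using W0(3) by blast
      then have "(z0, w) \<in> Pt t" unfolding Pt_def using z0(1) by simp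
      then have "(z0, w) \<in> Pt ?f" using Pf by simp
      then have fw: "act ?f z0 \<in> M w" unfolding Pt_def by simp
      have d: "(z0, z) \<in> \<delta>" using N(3)[OF z0(2)] .
      have 1: "(act t z, act t z0) \<in> B" using UX_sym[OF B(1) \<delta>(2)[OF z0O d]] .
      have 2: "(act t z0, act ?f z0) \<in> B" using B'(2)[OF UX_sym[OF B'(1) M(3)[OF w(2)]] M(3)[OF fw]] .
      have 3: "(act ?f z0, act ?f z) \<in> B" using \<delta>(2)[OF z0O d] .
      show ?thesis using B(2)[OF 1 2 3] .
    qed
    then show ?thesis using fF by blast
  qed
  ultimately show ?thesis using that by blast
qed

end

context sf
begin

lemma surj:
  assumes am: "amenable TYPE('t)"
  shows "act r ` \<Omega> = \<Omega>"
proof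
  show "act r ` \<Omega> \<subseteq> \<Omega>" using omega_inv by blast
  show "\<Omega> \<subseteq> act r ` \<Omega>"
  proof
    fix w assume w: "w \<in> \<Omega>"
    show "w \<in> act r ` \<Omega>"
    proof (rule ccontr)
      assume nw: "w \<notin> act r ` \<Omega>"
      obtain m :: "('t \<Rightarrow> real) \<Rightarrow> real" where
        lin: "\<forall>f\<in>Cb. \<forall>g\<in>Cb. \<forall>a b. m (\<lambda>s. a * f s + b * g s) = a * m f + b * m g"
        and pos: "\<forall>f\<in>Cb. (\<forall>s. f s \<ge> 0) \<longrightarrow> m f \<ge> 0"
        and one: "m (\<lambda>_. 1) = 1"
        and inv: "\<forall>f\<in>Cb. \<forall>t. m (\<lambda>s. f (t * s)) = m f"
        using am unfolding amenable_def by blast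
      let ?RO = "act r ` \<Omega>"
      have cRO: "compact ?RO" by (rule compact_continuous_image[OF cont_x compact_omega])
      then have clRO: "closed ?RO" by (rule compact_imp_closed)
      have ROsub: "?RO \<subseteq> \<Omega>" using omega_inv by blast
      have norm: "normal_space (top_of_set \<Omega>)"
      proof (rule compact_Hausdorff_or_regular_imp_normal_space)
        show "compact_space (top_of_set \<Omega>)"
          by (rule compact_space_subtopology) (simp add: compact_omega)
        show "Hausdorff_space (top_of_set \<Omega>) \<or> regular_space (top_of_set \<Omega>)"
          using Hausdorff_space_subtopology[OF Hausdorff_euc] by blast
      qed
      have "\<Omega> \<inter> ?RO = ?RO" using ROsub by blast
      then have c1: "closedin (top_of_set \<Omega>) ?RO"
        using closedin_closed_Int[OF clRO, of \<Omega>] by simp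
      have "\<Omega> \<inter> {w} = {w}" using w by blast
      then have c2: "closedin (top_of_set \<Omega>) {w}"
        using closedin_closed_Int[OF closed_singleton, of \<Omega> w] by simp
      have dj: "disjnt ?RO {w}" using nw unfolding disjnt_def by blast
      obtain g :: "'x \<Rightarrow> real" where g: "continuous_map (top_of_set \<Omega>) (top_of_set {0..1}) g"
        "g ` ?RO \<subseteq> {0}" "g ` {w} \<subseteq> {1}"
        using Urysohn_lemma[OF norm c1 c2 dj, where a=0 and b=1] by auto
      have gc: "continuous_on \<Omega> g" and g01: "\<And>y. y \<in> \<Omega> \<Longrightarrow> g y \<in> {0..1}"
        using g(1) by (auto simp: Pi_iff)
      have g0: "\<And>y. y \<in> \<Omega> \<Longrightarrow> g (act r y) = 0" using g(2) by blast
      have g1: "g w = 1" using g(3) by blast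
      have "\<exists>A. open A \<and> A \<inter> \<Omega> = g -` {1/2<..} \<inter> \<Omega>"
        using gc unfolding continuous_on_open_invariant by (simp add: open_greaterThan)
      then obtain A where A: "open A" "A \<inter> \<Omega> = g -` {1/2<..} \<inter> \<Omega>" by blast
      have "w \<in> g -` {1/2<..} \<inter> \<Omega>" using w g1 by simp
      then have wA: "w \<in> A" using A(2) by blast
      then have "A \<inter> \<Omega> \<noteq> {}" using w by blast
      then obtain K where K: "finite K" "\<And>y. y \<in> \<Omega> \<Longrightarrow> \<exists>k\<in>K. act k y \<in> A"
        using cover_open[OF A(1)] by metis
      define \<Phi> where "\<Phi> k = (\<lambda>s. g (act k (act s w)))" for k
      have cont_c: "continuous_on UNIV (\<lambda>s. act k (act s w))" for k
        by (rule continuous_on_compose2[OF cont_x[of UNIV k] cont_t[of UNIV w]]) simp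
      have inO: "act k (act s w) \<in> \<Omega>" for k s using omega_inv[OF omega_inv[OF w]] .
      have \<Phi>Cb: "\<Phi> k \<in> Cb" for k
      proof -
        have "continuous_on UNIV (\<Phi> k)" unfolding \<Phi>_def
          by (rule continuous_on_compose2[OF gc cont_c]) (use inO in blast)
        moreover have "\<bar>\<Phi> k s\<bar> \<le> 1" for s using g01[OF inO[of k s]] by (simp add: \<Phi>_def)
        ultimately show ?thesis unfolding Cb_iff by blast
      qed
      have m\<Phi>: "m (\<Phi> k) = m (\<Phi> 1)" for k
      proof -
        have "m (\<lambda>s. \<Phi> 1 (k * s)) = m (\<Phi> 1)" using inv \<Phi>Cb by blast
        moreover have "(\<lambda>s. \<Phi> 1 (k * s)) = \<Phi> k" by (simp add: \<Phi>_def act_mult)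
        ultimately show ?thesis by simp
      qed
      have "\<Phi> r = (\<lambda>s. 0)" unfolding \<Phi>_def using g0 omega_inv[OF w] by auto
      then have mr: "m (\<Phi> r) = 0" using m_zero[OF lin] by simp
      have m0: "m (\<Phi> k) = 0" for k using m\<Phi>[of k] m\<Phi>[of r] mr by simp
      have S: "(\<lambda>s. \<Sum>k\<in>K. \<Phi> k s) \<in> Cb" by (rule Cb_sum[OF K(1)]) (rule \<Phi>Cb)
      define h where "h = (\<lambda>s. 1 * (\<Sum>k\<in>K. \<Phi> k s) + (-1/2) * (1::real))"
      have hCb: "h \<in> Cb" unfolding h_def by (rule Cb_lin[OF S Cb_const[of 1]])
      have hpos: "h s \<ge> 0" for s
      proof -
        have sO: "act s w \<in> \<Omega>" using omega_inv[OF w] .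
        obtain k where k: "k \<in> K" "act k (act s w) \<in> A" using K(2)[OF sO] by blast
        have "act k (act s w) \<in> A \<inter> \<Omega>" using k(2) inO by blast
        then have "g (act k (act s w)) > 1/2" using A(2) by auto
        then have gt: "\<Phi> k s > 1/2" by (simp add: \<Phi>_def)
        have "\<Phi> k s \<le> (\<Sum>k\<in>K. \<Phi> k s)"
        proof (rule member_le_sum[OF k(1) _ K(1)])
          fix k' show "0 \<le> \<Phi> k' s" using g01[OF inO[of k' s]] by (simp add: \<Phi>_def)
        qed
        then have "(\<Sum>k\<in>K. \<Phi> k s) > 1/2" using gt by linarith
        then show ?thesis by (simp add: h_def)
      qed
      have L: "\<forall>a b. m (\<lambda>s. a * (\<Sum>k\<in>K. \<Phi> k s) + b * 1) = a * m (\<lambda>s. \<Sum>k\<in>K. \<Phi> k s) + b * m (\<lambda>s. 1)"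
        by (rule bspec[OF bspec[OF lin S] Cb_const])
      have "m h \<ge> 0" using pos hCb hpos by blast
      moreover have "m h = 1 * m (\<lambda>s. \<Sum>k\<in>K. \<Phi> k s) + (-1/2) * m (\<lambda>_. 1)"
        unfolding h_def by (rule L[rule_format])
      moreover have "m (\<lambda>s. \<Sum>k\<in>K. \<Phi> k s) = 0" using m_sum[OF lin K(1)] \<Phi>Cb m0 by simp
      ultimately show False using one by simp
    qed
  qed
qed

lemma left_inv:
  assumes am: "amenable TYPE('t)" and \<beta>: "\<beta> \<in> UX"
  shows "\<exists>k. \<forall>z\<in>\<Omega>. (z, act (k * f) z) \<in> \<beta>"
proof -
  obtain B1 :: "('x \<times> 'x) set" where B1: "B1 \<in> UX" "\<And>a b c. (a, b) \<in> B1 \<Longrightarrow> (b, c) \<in> B1 \<Longrightarrow> (a, c) \<in> \<beta>"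
    using UX_half[OF \<beta>] by metis
  obtain F1 where F1: "finite F1" "\<And>t. \<exists>g\<in>F1. \<forall>z\<in>\<Omega>. (act t z, act g z) \<in> B1"
    using net[OF B1(1)] by metis
  define G where "G n = (SOME g. g \<in> F1 \<and> (\<forall>z\<in>\<Omega>. (act (f ^ Suc n) z, act g z) \<in> B1))" for n
  have G: "G n \<in> F1 \<and> (\<forall>z\<in>\<Omega>. (act (f ^ Suc n) z, act (G n) z) \<in> B1)" for n
    unfolding G_def by (rule someI_ex) (use F1(2) in blast)
  have main: "\<exists>k. \<forall>z\<in>\<Omega>. (z, act (k * f) z) \<in> \<beta>" if ij: "i < j" "G i = G j" for i j
  proof -
    have close: "(act (f ^ Suc i) z, act (f ^ Suc j) z) \<in> \<beta>" if z: "z \<in> \<Omega>" for z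
      using B1(2)[OF conjunct2[OF G[of i], rule_format, OF z] UX_sym[OF B1(1)]] conjunct2[OF G[of j], rule_format, OF z] ij(2)
      by simp
    define d where "d = j - i"
    have d: "d \<ge> 1" "Suc j = d + Suc i" using ij(1) by (auto simp: d_def)
    define k where "k = f ^ (d - 1)"
    have kf: "k * f = f ^ d" unfolding k_def using d(1) by (metis Suc_diff_1 less_le_trans power_Suc2 zero_less_one)
    have "(w, act (k * f) w) \<in> \<beta>" if w: "w \<in> \<Omega>" for w
    proof -
      have "w \<in> act (f ^ Suc i) ` \<Omega>" using surj[OF am] w by blast
      then obtain z where z: "z \<in> \<Omega>" "w = act (f ^ Suc i) z" by blast
      have e: "f ^ Suc j = f ^ d * f ^ Suc i" by (simp only: d(2) power_add)
      have "act (k * f) w = act (f ^ d) w" by (simp only: kf)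
      also have "\<dots> = act (f ^ d) (act (f ^ Suc i) z)" by (simp only: z(2))
      also have "\<dots> = act (f ^ d * f ^ Suc i) z" by (simp only: act_mult)
      also have "\<dots> = act (f ^ Suc j) z" by (simp only: e)
      finally have "act (k * f) w = act (f ^ Suc j) z" .
      then show ?thesis using close[OF z(1)] z(2) by simp
    qed
    then show ?thesis by blast
  qed
  have "\<not> inj_on G {..card F1}"
  proof (rule pigeonhole)
    have "G ` {..card F1} \<subseteq> F1" using G by blast
    then have "card (G ` {..card F1}) \<le> card F1" using F1(1) by (rule card_mono[rotated])
    then show "card (G ` {..card F1}) < card {..card F1}" by simp
  qed
  then obtain i j where "i \<noteq> j" "G i = G j" unfolding inj_on_def by blast
  then show ?thesis
    using main by (metis linorder_neq_iff)
qed

lemma ap_dyn: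
  assumes am: "amenable TYPE('t)"
  shows "ap_dynamic act \<Omega>"
  unfolding ap_dynamic_def
proof
  fix \<alpha> :: "('x \<times> 'x) set" assume \<alpha>: "\<alpha> \<in> UX"
  obtain B :: "('x \<times> 'x) set" where B: "B \<in> UX" "\<And>a b c. (a, b) \<in> B \<Longrightarrow> (b, c) \<in> B \<Longrightarrow> (a, c) \<in> \<alpha>"
    using UX_half[OF \<alpha>] by metis
  obtain \<delta> where \<delta>: "\<delta> \<in> UX" "\<And>z y t. z \<in> \<Omega> \<Longrightarrow> (z, y) \<in> \<delta> \<Longrightarrow> (act t z, act t y) \<in> B"
    using unif_equi[OF B(1)] by metis
  obtain F where F: "finite F" "\<And>t. \<exists>f\<in>F. \<forall>z\<in>\<Omega>. (act t z, act f z) \<in> \<delta>"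
    using net[OF \<delta>(1)] by metis
  have "\<forall>f. \<exists>k. \<forall>z\<in>\<Omega>. (z, act (k * f) z) \<in> B" using left_inv[OF am B(1)] by blast
  then obtain kk where kk: "\<And>f z. z \<in> \<Omega> \<Longrightarrow> (z, act (kk f * f) z) \<in> B" by metis
  let ?A = "{a. \<forall>z\<in>\<Omega>. act a z \<in> ent_image \<alpha> {z}}"
  have "syndetic ?A" unfolding syndetic_def
  proof (intro exI conjI allI)
    show "compact (kk ` F)" using F(1) by (intro finite_imp_compact) simp
    fix t
    obtain f where f: "f \<in> F" "\<And>z. z \<in> \<Omega> \<Longrightarrow> (act t z, act f z) \<in> \<delta>" using F(2)[of t] by blast
    have "kk f * t \<in> ?A"
    proof (intro CollectI ballI)
      fix z assume z: "z \<in> \<Omega>"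
      have 1: "(z, act (kk f) (act f z)) \<in> B" using kk[OF z] by (simp add: act_mult)
      have 2: "(act (kk f) (act f z), act (kk f) (act t z)) \<in> B"
        using \<delta>(2)[OF omega_inv[OF z] UX_sym[OF \<delta>(1) f(2)[OF z]]] .
      have "(z, act (kk f * t) z) \<in> \<alpha>" using B(2)[OF 1 2] by (simp add: act_mult)
      then show "act (kk f * t) z \<in> ent_image \<alpha> {z}" by (simp add: ent_image_def)
    qed
    then show "(\<lambda>k. k * t) ` kk ` F \<inter> ?A \<noteq> {}" using f(1) by blast
  qed
  moreover have "\<forall>z\<in>\<Omega>. \<forall>a\<in>?A. act a z \<in> ent_image \<alpha> {z}" by blast
  ultimately show "\<exists>A. syndetic A \<and> (\<forall>z\<in>\<Omega>. \<forall>a\<in>A. act a z \<in> ent_image \<alpha> {z})" by blast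
qed

end

theorem theorem4:
  fixes act :: "'t::topological_monoid_mult \<Rightarrow> 'x::{uniform_space, t2_space} \<Rightarrow> 'x"
    and x :: 'x
  assumes "semiflow act"
    and "\<forall>F :: 't set. finite F \<longrightarrow> (\<Inter>s\<in>F. range (\<lambda>t. t * s)) \<noteq> {}"
    and "compact (closure (orbit act x))"
    and "omega_set act x \<subseteq> Equi act"
  shows "minimal_set act (omega_set act x) \<and> omega_set act x \<subseteq> RE act \<and> x \<in> AAP act
         \<and> (amenable TYPE('t) \<longrightarrow> ap_dynamic act (omega_set act x))"
proof -
  interpret sf act x using assms by (unfold_locales)
  show ?thesis using minimal RE_omega AAP_x ap_dyn by blast
qed

end
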